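(* Let $L,n$ be positive integers and $B\in\mathcal M(L,n)$. Then \[\rho_N(B)=e^\star_{[L-1,L-1]}\,e^\star_{[L-2,L-1]}\cdots e^\star_{[2,L-1]}\,e^\star_{[1,L-1]}(B).\]
   Context: $\mathcal M(L,n)$ is the set of tuples $B=(B_1,\dots,B_L)$ of subsets of $[n]$, drawn with rows $1..L$ bottom to top, columns $1..n$ left to right, ball in $(r,j)$ iff $j\in B_r$. $\mathrm{cw}(B)$ scans columns left to right, each top to bottom, recording row numbers of balls. For a word $w$ and $i\ge1$, $\mathrm{Par}_i(w)$ writes "(" for each letter $i+1$ and ")" for each letter $i$, reading left to right, and iteratively matches a "(" with a ")" to its right when adjacent or separated only by matched parentheses. $e_i^\star(B)$ moves every ball of row $i+1$ whose letter in $\mathrm{cw}(B)$ is unmatched in $\mathrm{Par}_i(\mathrm{cw}(B))$ down to row $i$ in the same column. Products of operators act right to left, $e^\star_{[a,b]}=e^\star_ae^\star_{a+1}\cdots e^\star_b$ for $a\le b$, and $\rho_N(B)=e^\star_{[1,L-1]}e^\star_{[1,L-2]}\cdots e^\star_{[1,2]}e^\star_{[1,1]}(B)$. *)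

theory Defs
  imports Main
begin

text \<open>A ball configuration B = (B_1,...,B_L) is represented as a function
  from row indices to subsets of columns; rows outside 1..L are empty.\<close>
definition Mset :: "nat \<Rightarrow> nat \<Rightarrow> (nat \<Rightarrow> nat set) set" where
  "Mset L n = {B. \<forall>r. B r \<subseteq> {1..n} \<and> (r \<notin> {1..L} \<longrightarrow> B r = {})}"

definition cw_cells :: "nat \<Rightarrow> nat \<Rightarrow> (nat \<Rightarrow> nat set) \<Rightarrow> (nat \<times> nat) list" where
  "cw_cells L n B = [(r, j). j \<leftarrow> [1..<n+1], r \<leftarrow> rev [1..<L+1], j \<in> B r]"

definition cw :: "nat \<Rightarrow> nat \<Rightarrow> (nat \<Rightarrow> nat set) \<Rightarrow> nat list" where
  "cw L n B = map fst (cw_cells L n B)"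

text \<open>Bracketing Par_i: letter i+1 is an opening bracket, letter i a closing one.
  Matching an opening bracket with a closing bracket to its right when adjacent or
  separated only by matched brackets is realised by the usual stack scan; the result is
  the list of columns of the unmatched opening brackets (letters i+1).\<close>
fun par_unmatched :: "nat \<Rightarrow> (nat \<times> nat) list \<Rightarrow> nat list \<Rightarrow> nat list" where
  "par_unmatched i [] st = st"
| "par_unmatched i ((r, j) # w) st =
     (if r = i + 1 then par_unmatched i w (j # st)
      else if r = i then par_unmatched i w (drop 1 st)
      else par_unmatched i w st)"

definition unmatched_cols :: "nat \<Rightarrow> nat \<Rightarrow> nat \<Rightarrow> (nat \<Rightarrow> nat set) \<Rightarrow> nat set" where
  "unmatched_cols L n i B = set (par_unmatched i (cw_cells L n B) [])"

definition estar :: "nat \<Rightarrow> nat \<Rightarrow> nat \<Rightarrow> (nat \<Rightarrow> nat set) \<Rightarrow> (nat \<Rightarrow> nat set)" where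
  "estar L n i B = (let U = unmatched_cols L n i B in
      B((i + 1) := B (i + 1) - U, i := B i \<union> U))"

text \<open>e^star_[a,b] = e_a e_{a+1} ... e_b (rightmost acts first).\<close>
definition estar_int :: "nat \<Rightarrow> nat \<Rightarrow> nat \<Rightarrow> nat \<Rightarrow> (nat \<Rightarrow> nat set) \<Rightarrow> (nat \<Rightarrow> nat set)" where
  "estar_int L n a b B = foldr (\<lambda>i. estar L n i) [a..<b+1] B"

text \<open>rho_N(B) = e_[1,L-1] e_[1,L-2] ... e_[1,1] (B).\<close>
definition rhoN :: "nat \<Rightarrow> nat \<Rightarrow> (nat \<Rightarrow> nat set) \<Rightarrow> (nat \<Rightarrow> nat set)" where
  "rhoN L n B = foldr (\<lambda>k. estar_int L n 1 k) (rev [1..<L]) B"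

end

theory Submission
  imports Defs
begin


fun phi :: "nat \<Rightarrow> (nat \<times> nat) list \<Rightarrow> nat" where
  "phi i [] = 0"
| "phi i ((r,j)#w) = (if r = i then Suc (phi i w) else if r = Suc i then phi i w - 1 else phi i w)"

fun ew :: "nat \<Rightarrow> (nat \<times> nat) list \<Rightarrow> (nat \<times> nat) list" where
  "ew i [] = []"
| "ew i ((r,j)#w) = (if r = Suc i \<and> phi i w = 0 then (i,j) else (r,j)) # ew i w"

lemma phi_ew_far: "Suc j < i \<or> Suc i < j \<Longrightarrow> phi i (ew j w) = phi i w"
  by (induction w) (auto split: prod.splits)

lemma ew_comm: "Suc j < i \<or> Suc i < j \<Longrightarrow> ew i (ew j w) = ew j (ew i w)"
  by (induction w) (auto simp: phi_ew_far split: prod.splits)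

lemma braid_aux:
  "(let a = phi i w; b = phi (Suc i) w; c = phi i (ew (Suc i) w); d = phi (Suc i) (ew i w);
        e = phi i (ew (Suc i) (ew i w)); f = phi (Suc i) (ew i (ew (Suc i) w))
    in c \<le> a \<and> d \<le> b \<and> e = c + b - d \<and> f = d + a - c \<and> (c = a \<or> d = b))
   \<and> ew i (ew (Suc i) (ew i w)) = ew (Suc i) (ew i (ew (Suc i) w))"
proof (induction w)
  case Nil
  then show ?case by simp
next
  case (Cons x w)
  obtain r j where x: "x = (r,j)" by fastforce
  show ?case
  proof (cases "r = i")
    case True
    then show ?thesis using Cons.IH unfolding x Let_def by auto
  next
    case f1: False
    show ?thesis
    proof (cases "r = Suc i")
      case True
      then show ?thesis using Cons.IH f1 unfolding x Let_def by auto
    next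
      case f2: False
      show ?thesis
      proof (cases "r = Suc (Suc i)")
        case True
        then show ?thesis using Cons.IH f1 f2 unfolding x Let_def by auto
      next
        case False
        then show ?thesis using Cons.IH f1 f2 unfolding x Let_def by auto
      qed
    qed
  qed
qed

lemma braid: "ew i (ew (Suc i) (ew i w)) = ew (Suc i) (ew i (ew (Suc i) w))"
  using braid_aux by blast

lemma comm_list: "\<forall>x\<in>set xs. Suc j < x \<or> Suc x < j \<Longrightarrow> foldr ew (j # xs) w = foldr ew (xs @ [j]) w"
  by (induction xs arbitrary: w) (auto simp: ew_comm)

lemma shift_one:
  assumes "1 \<le> i" "i \<le> m"
  shows "foldr ew (Suc i # [1..<m+2]) w = foldr ew ([1..<m+2] @ [i]) w"
proof -
  have sp: "[1..<m+2] = [1..<i] @ [i, Suc i] @ [i+2..<m+2]"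
  proof -
    have "[1..<m+2] = [1..<i] @ [i..<m+2]"
      using assms upt_add_eq_append[of 1 i "m+2-i"] by simp
    moreover have "[i..<m+2] = i # [Suc i..<m+2]" using assms upt_conv_Cons[of i "m+2"] by simp
    moreover have "[Suc i..<m+2] = Suc i # [i+2..<m+2]" using assms upt_conv_Cons[of "Suc i" "m+2"] by simp
    ultimately show ?thesis by simp
  qed
  have c1: "ew (Suc i) (foldr ew [Suc 0..<i] v) = foldr ew [Suc 0..<i] (ew (Suc i) v)" for v
    using comm_list[of "[1..<i]" "Suc i" v] by (auto simp del: upt_Suc)
  have c2: "ew i (foldr ew [Suc (Suc i)..<Suc (Suc m)] v) = foldr ew [Suc (Suc i)..<Suc (Suc m)] (ew i v)" for v
    using comm_list[of "[Suc (Suc i)..<Suc (Suc m)]" i v] by (auto simp del: upt_Suc)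
  have "foldr ew (Suc i # [1..<m+2]) w = foldr ew (Suc i # [1..<i]) (foldr ew ([i, Suc i] @ [i+2..<m+2]) w)"
    unfolding sp by (simp del: upt_Suc)
  also have "\<dots> = foldr ew [1..<i] (ew (Suc i) (ew i (ew (Suc i) (foldr ew [i+2..<m+2] w))))"
    by (simp add: c1 del: upt_Suc)
  also have "\<dots> = foldr ew [1..<i] (ew i (ew (Suc i) (ew i (foldr ew [i+2..<m+2] w))))"
    by (simp add: braid del: upt_Suc)
  also have "\<dots> = foldr ew [1..<i] (ew i (ew (Suc i) (foldr ew [i+2..<m+2] (ew i w))))"
    using c2[of w] by (simp del: upt_Suc)
  also have "\<dots> = foldr ew ([1..<m+2] @ [i]) w"
    unfolding sp by (simp del: upt_Suc)
  finally show ?thesis .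
qed

lemma shift_list:
  "\<forall>x\<in>set xs. 1 \<le> x \<and> x \<le> m \<Longrightarrow> foldr ew (map Suc xs @ [1..<m+2]) w = foldr ew ([1..<m+2] @ xs) w"
proof (induction xs arbitrary: w)
  case Nil then show ?case by simp
next
  case (Cons x xs)
  have "foldr ew (map Suc (x#xs) @ [1..<m+2]) w = ew (Suc x) (foldr ew ([1..<m+2] @ xs) w)"
    using Cons by simp
  also have "\<dots> = foldr ew (Suc x # [1..<m+2]) (foldr ew xs w)" by simp
  also have "\<dots> = foldr ew ([1..<m+2] @ [x]) (foldr ew xs w)"
    using Cons.prems shift_one by simp
  finally show ?case by simp
qed

fun X :: "nat \<Rightarrow> nat list" where
  "X 0 = []" | "X (Suc m) = [1..<m+2] @ X m"
fun Y :: "nat \<Rightarrow> nat list" where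
  "Y 0 = []" | "Y (Suc m) = map Suc (Y m) @ [1..<m+2]"

lemma Y_range: "x \<in> set (Y m) \<Longrightarrow> 1 \<le> x \<and> x \<le> m"
  by (induction m arbitrary: x) auto

lemma XY: "foldr ew (X m) w = foldr ew (Y m) w"
proof (induction m arbitrary: w)
  case 0 then show ?case by simp
next
  case (Suc m)
  have "foldr ew (Y (Suc m)) w = foldr ew ([1..<m+2] @ Y m) w"
    using shift_list[of "Y m" m w] Y_range by auto
  then show ?case using Suc by simp
qed

lemma X_eq: "concat (map (\<lambda>k. [1..<k+1]) (rev [1..<m+1])) = X m"
  by (induction m) auto

lemma Y_eq: "concat (map (\<lambda>a. [a..<m+1]) (rev [1..<m+1])) = Y m"
proof (induction m)
  case 0 then show ?case by simp
next
  case (Suc m)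
  have r: "rev [1..<Suc m+1] = map Suc (rev [1..<m+1]) @ [1]"
    by (simp add: upt_conv_Cons map_Suc_upt[symmetric] rev_map del: upt_Suc)
  have "concat (map (\<lambda>a. [a..<Suc m+1]) (map Suc (rev [1..<m+1])))
      = map Suc (concat (map (\<lambda>a. [a..<m+1]) (rev [1..<m+1])))"
    by (simp add: map_concat map_Suc_upt comp_def del: upt_Suc)
  then show ?case using Suc r by simp
qed

lemma foldr_concat: "foldr f (concat xss) a = foldr (\<lambda>xs. foldr f xs) xss a"
  by (induction xss) auto



lemma pu_drop: "par_unmatched i w st = par_unmatched i w [] @ drop (phi i w) st"
proof (induction w arbitrary: st)
  case Nil then show ?case by simp
next
  case (Cons x w)
  obtain r j where x: "x = (r,j)" by fastforce
  show ?case using Cons.IH[of "j # st"] Cons.IH[of "[j]"] Cons.IH[of "drop 1 st"] Cons.IH[of st]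
    unfolding x by (cases "phi i w") auto
qed

definition unm :: "nat \<Rightarrow> (nat \<times> nat) list \<Rightarrow> nat set" where
  "unm i w = set (par_unmatched i w [])"

lemma unm_Nil[simp]: "unm i [] = {}" by (simp add: unm_def)

lemma unm_Cons[simp]: "unm i ((r,j)#w) = unm i w \<union> (if r = Suc i \<and> phi i w = 0 then {j} else {})"
  unfolding unm_def using pu_drop[of i w "[j]"] pu_drop[of i w "[]"] by auto

lemma unm_sub: "j \<in> unm i w \<Longrightarrow> (Suc i, j) \<in> set w"
  by (induction w) (auto split: if_splits)

lemma unm_dec: "j \<in> unm i w \<Longrightarrow> \<exists>P S. w = P @ (Suc i, j) # S \<and> phi i S = 0"
proof (induction w)
  case Nil then show ?case by simp
next
  case (Cons x w)
  obtain r k where x: "x = (r,k)" by fastforce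
  show ?case
  proof (cases "j \<in> unm i w")
    case True
    then obtain P S where "w = P @ (Suc i, j) # S \<and> phi i S = 0" using Cons.IH by blast
    then show ?thesis unfolding x by (metis append_Cons)
  next
    case False
    then have "r = Suc i" "phi i w = 0" "k = j" using Cons.prems unfolding x by (auto split: if_splits)
    then show ?thesis unfolding x by (metis append_Nil)
  qed
qed

definition hU :: "nat \<Rightarrow> nat set \<Rightarrow> nat \<times> nat \<Rightarrow> nat \<times> nat" where
  "hU i U x = (if fst x = Suc i \<and> snd x \<in> U then (i, snd x) else x)"

lemma ew_map: "distinct w \<Longrightarrow> ew i w = map (hU i (unm i w)) w"
proof (induction w)
  case Nil then show ?case by simp
next
  case (Cons x w)
  obtain r j where x: "x = (r,j)" by fastforce
  have nin: "(r,j) \<notin> set w" using Cons.prems x by simp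
  have m: "map (hU i (unm i ((r,j)#w))) w = map (hU i (unm i w)) w"
  proof (rule map_cong[OF refl])
    fix y assume "y \<in> set w"
    show "hU i (unm i ((r,j)#w)) y = hU i (unm i w) y"
    proof (cases "r = Suc i \<and> phi i w = 0")
      case True
      have ne: "y \<noteq> (Suc i, j)" using nin \<open>y \<in> set w\<close> True by blast
      have u: "unm i ((r,j)#w) = insert j (unm i w)" using True by simp
      obtain a b where y: "y = (a,b)" by fastforce
      show ?thesis using ne unfolding hU_def u y by auto
    next
      case False
      have "(if r = Suc i \<and> phi i w = 0 then {j} else {}) = ({}::nat set)" using False by (rule if_not_P)
      then have e: "unm i ((r,j)#w) = unm i w" by (simp only: unm_Cons Un_empty_right)
      show ?thesis unfolding e ..
    qed
  qed
  have "j \<in> unm i w \<Longrightarrow> r = Suc i \<Longrightarrow> False" using unm_sub nin by blast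
  then show ?case using Cons m unfolding x by (auto simp: hU_def)
qed

lemma dec_aux: "x \<notin> set P \<Longrightarrow> x \<notin> set P' \<Longrightarrow> P @ x # S = P' @ x # S' \<Longrightarrow> S = S'"
proof (induction P arbitrary: P')
  case Nil then show ?case by (cases P') auto
next
  case (Cons a P) then show ?case by (cases P') auto
qed

lemma distinct_dec: "distinct (P @ x # S) \<Longrightarrow> P @ x # S = P' @ x # S' \<Longrightarrow> S = S'"
proof -
  assume a: "distinct (P @ x # S)" and b: "P @ x # S = P' @ x # S'"
  have "x \<notin> set P" using a by simp
  moreover have "x \<notin> set P'" using a unfolding b by simp
  ultimately show ?thesis using dec_aux[OF _ _ b] by simp
qed

definition col :: "nat \<Rightarrow> (nat \<Rightarrow> nat set) \<Rightarrow> nat \<Rightarrow> (nat \<times> nat) list" where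
  "col L B j = map (\<lambda>r. (r,j)) (filter (\<lambda>r. j \<in> B r) (rev [1..<L+1]))"

lemma cw_cells_col: "cw_cells L n B = concat (map (col L B) [1..<n+1])"
proof -
  have aux: "concat (map (\<lambda>r. if P r then [f r] else []) R) = map f (filter P R)" for P f and R :: "nat list"
    by (induction R) auto
  show ?thesis unfolding cw_cells_def col_def by (simp add: aux del: upt_Suc)
qed


lemma set_cw: "set (cw_cells L n B) = {(r,j). r \<in> {1..L} \<and> j \<in> {1..n} \<and> j \<in> B r}"
  by (auto simp: cw_cells_def)

lemma distinct_cols: "distinct J \<Longrightarrow> distinct (concat (map (col L B) J))"
proof (induction J)
  case Nil then show ?case by simp
next
  case (Cons j J)
  have "set (col L B j) \<inter> set (concat (map (col L B) J)) = {}"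
    using Cons.prems by (auto simp: col_def)
  moreover have "distinct (col L B j)" by (auto simp: col_def distinct_map inj_on_def)
  ultimately show ?case using Cons by simp
qed

lemma distinct_cw: "distinct (cw_cells L n B)"
  unfolding cw_cells_col by (rule distinct_cols) simp

lemma B_from_cw: "B \<in> Mset L n \<Longrightarrow> B r = {j. (r,j) \<in> set (cw_cells L n B)}"
proof -
  assume "B \<in> Mset L n"
  then have "B r \<subseteq> {1..n}" "r \<notin> {1..L} \<Longrightarrow> B r = {}" unfolding Mset_def by auto
  then show ?thesis unfolding set_cw by auto
qed

lemma Mset_eq: "B1 \<in> Mset L n \<Longrightarrow> B2 \<in> Mset L n \<Longrightarrow> cw_cells L n B1 = cw_cells L n B2 \<Longrightarrow> B1 = B2"
  by (rule ext) (metis B_from_cw)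

lemma R_split:
  assumes "1 \<le> i" "Suc i \<le> L"
  shows "rev [1..<L+1] = rev [i+2..<L+1] @ [Suc i, i] @ rev [1..<i]"
proof -
  have "[1..<L+1] = [1..<i] @ [i..<L+1]"
    using assms upt_add_eq_append[of 1 i "L+1-i"] by simp
  moreover have "[i..<L+1] = i # [Suc i..<L+1]" using assms upt_conv_Cons[of i "L+1"] by simp
  moreover have "[Suc i..<L+1] = Suc i # [i+2..<L+1]" using assms upt_conv_Cons[of "Suc i" "L+1"] by simp
  ultimately show ?thesis by simp
qed

lemma J_split: "j \<in> {1..n} \<Longrightarrow> [1..<n+1] = [1..<j] @ j # [Suc j..<n+1]"
proof -
  assume j: "j \<in> {1..n}"
  have "[1..<n+1] = [1..<j] @ [j..<n+1]"
    using j upt_add_eq_append[of 1 j "n+1-j"] by simp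
  moreover have "[j..<n+1] = j # [Suc j..<n+1]" using j upt_conv_Cons[of j "n+1"] by simp
  ultimately show ?thesis by simp
qed

lemma estar_step:
  assumes B: "B \<in> Mset L n" and i: "1 \<le> i" "Suc i \<le> L"
  shows "estar L n i B \<in> Mset L n \<and> cw_cells L n (estar L n i B) = ew i (cw_cells L n B)"
proof -
  define w where "w = cw_cells L n B"
  define U where "U = unm i w"
  define A where "A = rev [i+2..<L+1]"
  define C where "C = rev [1..<i::nat]"
  have R: "rev [1..<L+1] = A @ [Suc i, i] @ C" unfolding A_def C_def using R_split i by blast
  have AC: "r \<noteq> i \<and> r \<noteq> Suc i" if "r \<in> set A \<union> set C" for r
    using that unfolding A_def C_def by auto
  have B': "estar L n i B = B(Suc i := B (Suc i) - U, i := B i \<union> U)"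
    unfolding estar_def unmatched_cols_def U_def unm_def w_def Let_def by simp
  have F1: "j \<in> B (Suc i) \<and> j \<in> {1..n}" if "j \<in> U" for j
    using unm_sub[of j i w] that unfolding U_def w_def set_cw by auto
  have F2: "j \<notin> B i" if jU: "j \<in> U" for j
  proof
    assume ji: "j \<in> B i"
    define P where "P = (\<lambda>r. j \<in> B r)"
    have "col L B j = map (\<lambda>r. (r,j)) (filter P A) @ [(Suc i, j), (i, j)] @ map (\<lambda>r. (r,j)) (filter P C)"
      unfolding col_def R using F1[OF jU] ji unfolding P_def by simp
    then have "w = (concat (map (col L B) [1..<j]) @ map (\<lambda>r. (r,j)) (filter P A)) @ (Suc i, j) # ((i, j) #
        map (\<lambda>r. (r,j)) (filter P C) @ concat (map (col L B) [Suc j..<n+1]))"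
      unfolding w_def cw_cells_col using J_split[of j n] F1[OF jU] by simp
    moreover obtain P0 S where "w = P0 @ (Suc i, j) # S" "phi i S = 0"
      using unm_dec[of j i w] jU unfolding U_def by blast
    ultimately have "S = (i, j) # map (\<lambda>r. (r,j)) (filter P C) @ concat (map (col L B) [Suc j..<n+1])"
      using distinct_dec[of P0 "(Suc i, j)" S] distinct_cw[of L n B] unfolding w_def[symmetric] by metis
    then show False using \<open>phi i S = 0\<close> by simp
  qed
  have col: "col L (estar L n i B) j = map (hU i U) (col L B j)" for j
  proof (cases "j \<in> U")
    case True
    have e1: "filter (\<lambda>r. j \<in> estar L n i B r) X = filter (\<lambda>r. j \<in> B r) X" if "set X \<subseteq> set A \<union> set C" for X
      by (rule filter_cong[OF refl]) (use that AC in \<open>auto simp: B'\<close>)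
    have e2: "map (hU i U) (map (\<lambda>r. (r,j)) X) = map (\<lambda>r. (r,j)) X" if "set X \<subseteq> set A \<union> set C" for X
      using that AC by (auto simp: hU_def)
    have s1: "set (filter (\<lambda>r. j \<in> B r) A) \<subseteq> set A \<union> set C" "set (filter (\<lambda>r. j \<in> B r) C) \<subseteq> set A \<union> set C"
      by auto
    show ?thesis unfolding col_def R
      using e1[of A] e1[of C] e2[OF s1(1)] e2[OF s1(2)] True F1[OF True] F2[OF True]
      by (simp add: B' hU_def)
  next
    case False
    have "filter (\<lambda>r. j \<in> estar L n i B r) X = filter (\<lambda>r. j \<in> B r) X" for X
      by (rule filter_cong[OF refl]) (use False in \<open>auto simp: B'\<close>)
    moreover have "map (hU i U) (map (\<lambda>r. (r,j)) X) = map (\<lambda>r. (r,j)) X" for X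
      using False by (auto simp: hU_def)
    ultimately show ?thesis unfolding col_def by (simp del: upt_Suc map_map)
  qed
  have "cw_cells L n (estar L n i B) = map (hU i U) w"
    unfolding cw_cells_col w_def col by (simp add: map_concat comp_def del: upt_Suc)
  also have "\<dots> = ew i w" unfolding U_def using ew_map[of w i] distinct_cw unfolding w_def by simp
  finally have c: "cw_cells L n (estar L n i B) = ew i (cw_cells L n B)" unfolding w_def .
  have "estar L n i B \<in> Mset L n"
    using B i F1 unfolding B' Mset_def by auto
  then show ?thesis using c by simp
qed

lemma estar_foldr:
  assumes "B \<in> Mset L n" "\<forall>x\<in>set xs. 1 \<le> x \<and> Suc x \<le> L"
  shows "foldr (estar L n) xs B \<in> Mset L n \<and> cw_cells L n (foldr (estar L n) xs B) = foldr ew xs (cw_cells L n B)"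
  using assms
proof (induction xs)
  case Nil then show ?case by simp
next
  case (Cons x xs)
  then show ?case using estar_step[of "foldr (estar L n) xs B" L n x] by simp
qed

lemma X_sub: "set (X m) \<subseteq> {1..m}"
  by (induction m) auto

lemma X_range: "x \<in> set (X m) \<Longrightarrow> 1 \<le> x \<and> x \<le> m"
  using X_sub by fastforce

theorem lemma4p13:
  fixes L n :: nat and B :: "nat \<Rightarrow> nat set"
  assumes "L \<ge> 1" and "n \<ge> 1" and "B \<in> Mset L n"
  shows "rhoN L n B = foldr (\<lambda>a. estar_int L n a (L - 1)) (rev [1..<L]) B"
proof -
  obtain m where L: "L = Suc m" using assms(1) by (cases L) auto
  have "rhoN L n B = foldr (estar L n) (concat (map (\<lambda>k. [1..<k+1]) (rev [1..<m+1]))) B"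
    unfolding rhoN_def estar_int_def foldr_concat L by (simp add: foldr_map comp_def del: upt_Suc)
  also have "\<dots> = foldr (estar L n) (X m) B" by (simp only: X_eq)
  finally have l: "rhoN L n B = foldr (estar L n) (X m) B" .
  have "foldr (\<lambda>a. estar_int L n a (L - 1)) (rev [1..<L]) B
      = foldr (estar L n) (concat (map (\<lambda>a. [a..<m+1]) (rev [1..<m+1]))) B"
    unfolding estar_int_def foldr_concat L by (simp add: foldr_map comp_def del: upt_Suc)
  also have "\<dots> = foldr (estar L n) (Y m) B" by (simp only: Y_eq)
  finally have r: "foldr (\<lambda>a. estar_int L n a (L - 1)) (rev [1..<L]) B = foldr (estar L n) (Y m) B" .
  have rx: "\<forall>x\<in>set (X m). 1 \<le> x \<and> Suc x \<le> L" using X_range L by auto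
  have ry: "\<forall>x\<in>set (Y m). 1 \<le> x \<and> Suc x \<le> L" using Y_range L by auto
  show ?thesis unfolding l r
    using estar_foldr[OF assms(3) rx] estar_foldr[OF assms(3) ry] XY Mset_eq by metis
qed

end
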